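(* Let $F$ be a field, $\omega$ a non-principal ultrafilter on $\mathbb{N}$ and $n_k\to\infty$. The group of invertible elements of the algebra $\prod_{k\to\omega}M_{n_k}(F)/\operatorname{Ker}\rho_\omega$ is isomorphic to $\prod_{k\to\omega}GL_{n_k}(F)/d_\omega$ (via the natural map induced by the inclusions $GL_{n_k}(F)\subseteq M_{n_k}(F)$).
   Context: For $a\in M_n(F)$, $\rho(a)=\operatorname{rk}(a)/n$. $\prod_{k\to\omega}M_{n_k}(F)/\operatorname{Ker}\rho_\omega$ is the quotient of $\prod_kM_{n_k}(F)$ by the ideal of sequences with $\lim_{k\to\omega}\rho(a_k)=0$. $\prod_{k\to\omega}GL_{n_k}(F)/d_\omega$ is the quotient of $\prod_kGL_{n_k}(F)$ by the normal subgroup $\{(a_k)_k:\lim_{k\to\omega}\rho(a_k-\mathrm{Id})=0\}$. *)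

theory Defs
  imports "Jordan_Normal_Form.DL_Rank" "HOL-Algebra.QuotRing" "HOL-Algebra.Coset"
begin

definition ultrafilter :: "nat filter \<Rightarrow> bool" where
  "ultrafilter U \<longleftrightarrow> U \<noteq> bot \<and> (\<forall>P. eventually P U \<or> eventually (\<lambda>x. \<not> P x) U)"

definition nonprincipal :: "nat filter \<Rightarrow> bool" where
  "nonprincipal U \<longleftrightarrow> (\<forall>m. \<not> eventually (\<lambda>x. x = m) U)"

definition rho :: "nat \<Rightarrow> 'a::field mat \<Rightarrow> real" where
  "rho m a = real (vec_space.rank m a) / real m"

definition mat_seq_ring :: "'a::field itself \<Rightarrow> (nat \<Rightarrow> nat) \<Rightarrow> (nat \<Rightarrow> 'a mat) ring" where
  "mat_seq_ring T n = \<lparr>carrier = {a. \<forall>k. a k \<in> carrier_mat (n k) (n k)},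
      mult = (\<lambda>a b k. a k * b k), one = (\<lambda>k. 1\<^sub>m (n k)),
      zero = (\<lambda>k. 0\<^sub>m (n k) (n k)), add = (\<lambda>a b k. a k + b k)\<rparr>"

definition ker_rho :: "'a::field itself \<Rightarrow> nat filter \<Rightarrow> (nat \<Rightarrow> nat) \<Rightarrow> (nat \<Rightarrow> 'a mat) set" where
  "ker_rho T U n = {a \<in> carrier (mat_seq_ring T n). ((\<lambda>k. rho (n k) (a k)) \<longlongrightarrow> 0) U}"

definition gl_seq_group :: "'a::field itself \<Rightarrow> (nat \<Rightarrow> nat) \<Rightarrow> (nat \<Rightarrow> 'a mat) monoid" where
  "gl_seq_group T n = \<lparr>carrier = {a. \<forall>k. a k \<in> carrier_mat (n k) (n k) \<and> invertible_mat (a k)},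
      mult = (\<lambda>a b k. a k * b k), one = (\<lambda>k. 1\<^sub>m (n k))\<rparr>"

definition d_kernel :: "'a::field itself \<Rightarrow> nat filter \<Rightarrow> (nat \<Rightarrow> nat) \<Rightarrow> (nat \<Rightarrow> 'a mat) set" where
  "d_kernel T U n = {g \<in> carrier (gl_seq_group T n).
      ((\<lambda>k. rho (n k) (g k - 1\<^sub>m (n k))) \<longlongrightarrow> 0) U}"

definition natural_map :: "'a::field itself \<Rightarrow> nat filter \<Rightarrow> (nat \<Rightarrow> nat)
    \<Rightarrow> (nat \<Rightarrow> 'a mat) set \<Rightarrow> (nat \<Rightarrow> 'a mat) set" where
  "natural_map T U n C = the_elem ((\<lambda>g. ker_rho T U n +>\<^bsub>mat_seq_ring T n\<^esub> g) ` C)"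

end

theory Submission
  imports Defs
begin


context vec_space begin

lemma colsp_sub: assumes A: "A \<in> carrier_mat n nc"
  shows "subspace class_ring (col_space A) V"
  unfolding col_space_def using A cols_dim[of A] by (intro span_is_subspace) auto

lemma colsp_carrier: assumes A: "A \<in> carrier_mat n nc"
  shows "col_space A \<subseteq> carrier_vec n"
  using colsp_sub[OF A] unfolding subspace_def submodule_def by auto

lemma colsp_memI: assumes A: "A \<in> carrier_mat n nc" and x: "x \<in> carrier_vec nc"
  shows "A *\<^sub>v x \<in> col_space A"
proof -
  have "A *\<^sub>v x \<in> carrier_vec (dim_row A)" using A x by auto
  moreover have "x \<in> carrier_vec (dim_col A)" using A x by auto
  ultimately show ?thesis unfolding col_space_eq[OF A] by blast
qed

lemma colsp_memE: assumes A: "A \<in> carrier_mat n nc" and y: "y \<in> col_space A"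
  obtains x where "x \<in> carrier_vec nc" "y = A *\<^sub>v x"
proof -
  from y obtain x where "x \<in> carrier_vec (dim_col A)" "A *\<^sub>v x = y" unfolding col_space_eq[OF A] by blast
  then show ?thesis using that A by auto
qed

lemma rank_basis:
  assumes A: "A \<in> carrier_mat n nc"
  obtains S where "finite S" "S \<subseteq> col_space A" "lin_indpt S" "card S = rank A" "span S = col_space A"
proof -
  let ?W = "vs (col_space A)"
  have sub: "subspace class_ring (col_space A) V" by (rule colsp_sub[OF A])
  have vsW: "vectorspace class_ring ?W" using subspace_is_vs[OF sub] .
  have fd: "vectorspace.fin_dim class_ring ?W" using fin_dim_span_cols[OF A] unfolding col_space_def .
  obtain S where fS: "finite S" and bS: "vectorspace.basis class_ring ?W S"
    using vectorspace.finite_basis_exists[OF vsW fd] by blast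
  from bS have S1: "S \<subseteq> col_space A" and li: "\<not> module.lin_dep class_ring ?W S"
    and sp: "LinearCombinations.module.span class_ring ?W S = col_space A"
    unfolding vectorspace.basis_def[OF vsW] by auto
  have submod: "submodule class_ring (col_space A) V" using sub unfolding subspace_def by auto
  have li': "lin_indpt S" using span_li_not_depend(2)[OF S1 submod] li by simp
  have span: "span S = col_space A" using span_li_not_depend(1)[OF S1 submod] sp by simp
  have "vectorspace.dim class_ring ?W = card S" using vectorspace.dim_basis[OF vsW fS bS] .
  then have "card S = rank A" unfolding rank_def col_space_def by simp
  then show ?thesis using that fS S1 li' span by blast
qed

lemma li_card_le_rank:
  assumes A: "A \<in> carrier_mat n nc" and S: "S \<subseteq> col_space A" and li: "lin_indpt S"
  shows "finite S" "card S \<le> rank A"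
proof -
  let ?W = "vs (col_space A)"
  have sub: "subspace class_ring (col_space A) V" by (rule colsp_sub[OF A])
  have vsW: "vectorspace class_ring ?W" using subspace_is_vs[OF sub] .
  have fd: "vectorspace.fin_dim class_ring ?W" using fin_dim_span_cols[OF A] unfolding col_space_def .
  have submod: "submodule class_ring (col_space A) V" using sub unfolding subspace_def by auto
  have li': "\<not> module.lin_dep class_ring ?W S" using span_li_not_depend(2)[OF S submod] li by simp
  have "S \<subseteq> carrier ?W" using S by simp
  from vectorspace.li_le_dim[OF vsW fd this li']
  show "finite S" "card S \<le> rank A" unfolding rank_def col_space_def by auto
qed

lemma rank_mono_colsp:
  assumes A: "A \<in> carrier_mat n nc" and B: "B \<in> carrier_mat n nc'"
    and sub: "col_space A \<subseteq> col_space B"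
  shows "rank A \<le> rank B"
proof -
  obtain S where "finite S" "S \<subseteq> col_space A" "lin_indpt S" "card S = rank A"
    using rank_basis[OF A] by metis
  then show ?thesis using li_card_le_rank(2)[OF B, of S] sub by auto
qed

lemma rank_mult_left:
  assumes A: "A \<in> carrier_mat n k" and B: "B \<in> carrier_mat k nc"
  shows "rank (A * B) \<le> rank A"
proof (rule rank_mono_colsp[OF _ A])
  show "A * B \<in> carrier_mat n nc" using A B by auto
  show "col_space (A * B) \<subseteq> col_space A"
  proof
    fix y assume "y \<in> col_space (A * B)"
    then obtain x where x: "x \<in> carrier_vec nc" and y: "y = (A * B) *\<^sub>v x"
      using colsp_memE[OF mult_carrier_mat[OF A B]] by metis
    have "y = A *\<^sub>v (B *\<^sub>v x)" using y A B x by (simp add: assoc_mult_mat_vec)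
    moreover have "B *\<^sub>v x \<in> carrier_vec k" using B x by auto
    ultimately show "y \<in> col_space A" using colsp_memI[OF A] by simp
  qed
qed

lemma rank_mult_right:
  assumes A: "A \<in> carrier_mat n n" and B: "B \<in> carrier_mat n nc"
  shows "rank (A * B) \<le> rank B"
proof -
  obtain S where fS: "finite S" and S: "S \<subseteq> col_space B" "lin_indpt S" "card S = rank B"
    and spS: "span S = col_space B"
    using rank_basis[OF B] by metis
  obtain ss where ss: "set ss = S" "distinct ss" using finite_distinct_list[OF fS] by blast
  have Sc: "S \<subseteq> carrier_vec n" using S(1) colsp_carrier[OF B] by auto
  define Bs where "Bs = mat_of_cols n ss"
  have Bs: "Bs \<in> carrier_mat n (length ss)" unfolding Bs_def by auto
  have cBs: "cols Bs = ss" unfolding Bs_def using Sc ss by (intro cols_mat_of_cols) auto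
  have cs: "col_space Bs = col_space B" unfolding col_space_def[of Bs] cBs ss(1) spS ..
  have ABs: "A * Bs \<in> carrier_mat n (length ss)" using A Bs by auto
  have "col_space (A * B) \<subseteq> col_space (A * Bs)"
  proof
    fix y assume "y \<in> col_space (A * B)"
    then obtain x where x: "x \<in> carrier_vec nc" and y: "y = (A * B) *\<^sub>v x"
      using colsp_memE[OF mult_carrier_mat[OF A B]] by metis
    have "B *\<^sub>v x \<in> col_space B" using colsp_memI[OF B x] .
    then have "B *\<^sub>v x \<in> col_space Bs" using cs by simp
    then obtain c where c: "c \<in> carrier_vec (length ss)" and bc: "B *\<^sub>v x = Bs *\<^sub>v c"
      using colsp_memE[OF Bs] by metis
    have "y = A *\<^sub>v (B *\<^sub>v x)" using y A B x by (simp add: assoc_mult_mat_vec)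
    also have "\<dots> = (A * Bs) *\<^sub>v c" unfolding bc using A Bs c by (simp add: assoc_mult_mat_vec)
    finally show "y \<in> col_space (A * Bs)" using colsp_memI[OF ABs c] by simp
  qed
  then have "rank (A * B) \<le> rank (A * Bs)" using rank_mono_colsp[OF mult_carrier_mat[OF A B] ABs] by auto
  also have "\<dots> \<le> length ss" by (rule rank_le_nc[OF ABs])
  also have "\<dots> = rank B" using S(3) ss distinct_card by fastforce
  finally show ?thesis .
qed

lemma rank_uminus:
  assumes A: "A \<in> carrier_mat n n"
  shows "rank (- A) = rank A"
proof -
  have e1: "- A = (- 1\<^sub>m n) * A" using A by simp
  have e2: "A = (- 1\<^sub>m n) * (- A)" using A by simp
  have "rank (- A) \<le> rank A" unfolding e1 by (rule rank_mult_right[OF _ A]) auto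
  moreover have "rank A \<le> rank (- A)" by (subst e2, rule rank_mult_right) (use A in auto)
  ultimately show ?thesis by simp
qed

lemma rank_one: "rank (1\<^sub>m n) = n"
  using det_rank_iff[of "1\<^sub>m n"] by simp

lemma colsp_full_rank:
  assumes a: "a \<in> carrier_mat n n" and full: "col_space a = carrier_vec n"
  shows "rank a = n"
proof -
  have b: "basis (set (unit_vecs n))" by (rule unit_vecs_basis)
  then have li: "lin_indpt (set (unit_vecs n))"
    unfolding basis_def by blast
  have sub: "set (unit_vecs n :: 'a vec list) \<subseteq> carrier_vec n" unfolding unit_vecs_def by auto
  have "card (set (unit_vecs n :: 'a vec list)) = n" using distinct_card[OF unit_vecs_distinct] by simp
  then have "n \<le> rank a" using li_card_le_rank(2)[OF a _ li] sub full by auto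
  then show ?thesis using rank_le_nc[OF a] by simp
qed

lemma rank_step:
  assumes a: "a \<in> carrier_mat n n" and lt: "rank a < n"
  shows "\<exists>E \<in> carrier_mat n n. rank E \<le> 1 \<and> rank a < rank (a + E)"
proof -
  have "det a = 0" using det_rank_iff[OF a] lt by simp
  then obtain x where x: "x \<in> carrier_vec n" "x \<noteq> 0\<^sub>v n" "a *\<^sub>v x = 0\<^sub>v n"
    using det_0_iff_vec_prod_zero_field[OF a] by blast
  obtain i where i: "i < n" "x $ i \<noteq> 0"
  proof (rule ccontr)
    assume "\<not> thesis"
    then have "\<forall>i<n. x $ i = 0" using that by blast
    then have "x = 0\<^sub>v n" using x(1) by (intro eq_vecI) auto
    then show False using x(2) by simp
  qed
  have "col_space a \<noteq> carrier_vec n" using colsp_full_rank[OF a] lt by auto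
  then obtain u where u: "u \<in> carrier_vec n" "u \<notin> col_space a" using colsp_carrier[OF a] by blast
  define g where "g = (\<lambda>c. if c = i then inverse (x $ i) else 0)"
  define E where "E = mat n n (\<lambda>(r,c). u $ r * g c)"
  have E: "E \<in> carrier_mat n n" unfolding E_def by auto
  have rE: "rank E \<le> 1"
    by (rule rank_le_1_product_entries[OF E, of "\<lambda>r. u $ r" g]) (auto simp: E_def)
  have Ev: "E *\<^sub>v w = (w $ i / x $ i) \<cdot>\<^sub>v u" if w: "w \<in> carrier_vec n" for w
  proof (rule eq_vecI)
    show "dim_vec (E *\<^sub>v w) = dim_vec ((w $ i / x $ i) \<cdot>\<^sub>v u)" using E u by simp
    fix r assume "r < dim_vec ((w $ i / x $ i) \<cdot>\<^sub>v u)"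
    then have r: "r < n" using u by simp
    have "(E *\<^sub>v w) $ r = (\<Sum>c\<in>{0..<n}. u $ r * g c * w $ c)"
      using r w E unfolding E_def by (simp add: scalar_prod_def)
    also have "\<dots> = (\<Sum>c\<in>{0..<n}. if c = i then u $ r * inverse (x $ i) * w $ i else 0)"
      by (rule sum.cong) (auto simp: g_def)
    also have "\<dots> = u $ r * inverse (x $ i) * w $ i" using i by simp
    also have "\<dots> = ((w $ i / x $ i) \<cdot>\<^sub>v u) $ r" using r u by (simp add: field_simps)
    finally show "(E *\<^sub>v w) $ r = ((w $ i / x $ i) \<cdot>\<^sub>v u) $ r" .
  qed
  define a' where "a' = a + E"
  have a': "a' \<in> carrier_mat n n" unfolding a'_def using a E by auto
  have a'v: "a' *\<^sub>v w = a *\<^sub>v w + (w $ i / x $ i) \<cdot>\<^sub>v u" if w: "w \<in> carrier_vec n" for w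
    unfolding a'_def using add_mult_distrib_mat_vec[OF a E w] Ev[OF w] by simp
  have "a' *\<^sub>v x = u" unfolding a'v[OF x(1)] x(3) using i u by simp
  then have u': "u \<in> col_space a'" using colsp_memI[OF a' x(1)] by simp
  have sub: "col_space a \<subseteq> col_space a'"
  proof
    fix y assume "y \<in> col_space a"
    then obtain v where v: "v \<in> carrier_vec n" and y: "y = a *\<^sub>v v" using colsp_memE[OF a] by metis
    define w where "w = v - (v $ i / x $ i) \<cdot>\<^sub>v x"
    have w: "w \<in> carrier_vec n" unfolding w_def using v x by auto
    have wi: "w $ i = 0" unfolding w_def using v x i by simp
    have "a *\<^sub>v w = a *\<^sub>v v - a *\<^sub>v ((v $ i / x $ i) \<cdot>\<^sub>v x)"
      unfolding w_def using a v x by (intro mult_minus_distrib_mat_vec) auto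
    also have "a *\<^sub>v ((v $ i / x $ i) \<cdot>\<^sub>v x) = 0\<^sub>v n" using mult_mat_vec[OF a x(1)] x(3) by simp
    finally have aw: "a *\<^sub>v w = a *\<^sub>v v" using a v by simp
    have "a' *\<^sub>v w = a *\<^sub>v v" unfolding a'v[OF w] wi aw using a v u by simp
    then show "y \<in> col_space a'" using colsp_memI[OF a' w] y by simp
  qed
  obtain S where fS: "finite S" and S: "S \<subseteq> col_space a" "lin_indpt S" "card S = rank a"
    and spS: "span S = col_space a" using rank_basis[OF a] by metis
  have Sc: "S \<subseteq> carrier_vec n" using S(1) colsp_carrier[OF a] by auto
  have uS: "u \<notin> S" using u S(1) by auto
  have "lin_indpt (S \<union> {u})" using lin_dep_iff_in_span[OF Sc S(2) u(1) uS] u(2) spS by simp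
  moreover have "S \<union> {u} \<subseteq> col_space a'" using S(1) sub u' by auto
  ultimately have "card (S \<union> {u}) \<le> rank a'" using li_card_le_rank(2)[OF a'] by blast
  moreover have "card (S \<union> {u}) = rank a + 1" using fS uS S(3) by simp
  ultimately show ?thesis using E rE unfolding a'_def by auto
qed

lemma rank_perturb:
  assumes a: "a \<in> carrier_mat n n"
  shows "\<exists>g \<in> carrier_mat n n. rank g = n \<and> rank (g - a) + rank a \<le> n"
  using a
proof (induction "n - rank a" arbitrary: a rule: less_induct)
  case less
  note a = less.prems
  show ?case
  proof (cases "rank a < n")
    case False
    then have "rank a = n" using rank_le_nc[OF a] by simp
    moreover have "a - a = 0\<^sub>m n n" using a by simp
    ultimately show ?thesis using a rank_0I by (intro bexI[of _ a]) auto
  next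
    case True
    then obtain E where E: "E \<in> carrier_mat n n" "rank E \<le> 1" "rank a < rank (a + E)"
      using rank_step[OF a] by blast
    have a': "a + E \<in> carrier_mat n n" using a E by auto
    have "n - rank (a + E) < n - rank a" using E(3) rank_le_nc[OF a'] by simp
    from less.hyps[OF this a'] obtain g where g: "g \<in> carrier_mat n n" "rank g = n"
      "rank (g - (a + E)) + rank (a + E) \<le> n" by blast
    have eq: "g - a = (g - (a + E)) + E" using g(1) a E by (auto intro!: eq_matI)
    have "rank (g - a) \<le> rank (g - (a + E)) + rank E"
      unfolding eq by (rule rank_subadditive) (use g(1) a E in auto)
    then show ?thesis using g E by (intro bexI[of _ g]) auto
  qed
qed

end


lemma R_simps[simp]:
  "carrier (mat_seq_ring T n) = {a. \<forall>k. a k \<in> carrier_mat (n k) (n k)}"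
  "mult (mat_seq_ring T n) = (\<lambda>a b k. a k * b k)"
  "one (mat_seq_ring T n) = (\<lambda>k. 1\<^sub>m (n k))"
  "zero (mat_seq_ring T n) = (\<lambda>k. 0\<^sub>m (n k) (n k))"
  "add (mat_seq_ring T n) = (\<lambda>a b k. a k + b k)"
  by (simp_all add: mat_seq_ring_def)

lemma G_simps[simp]:
  "carrier (gl_seq_group T n) = {a. \<forall>k. a k \<in> carrier_mat (n k) (n k) \<and> invertible_mat (a k)}"
  "mult (gl_seq_group T n) = (\<lambda>a b k. a k * b k)"
  "one (gl_seq_group T n) = (\<lambda>k. 1\<^sub>m (n k))"
  by (simp_all add: gl_seq_group_def)

lemma ring_R: "ring (mat_seq_ring (T :: 'a :: field itself) n)"
proof (rule ringI)
  show "abelian_group (mat_seq_ring T n)"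
  proof (rule abelian_groupI)
    fix x assume x: "x \<in> carrier (mat_seq_ring T n)"
    show "\<exists>y\<in>carrier (mat_seq_ring T n). y \<oplus>\<^bsub>mat_seq_ring T n\<^esub> x = \<zero>\<^bsub>mat_seq_ring T n\<^esub>"
      using x by (intro bexI[of _ "\<lambda>k. - x k"]) (auto simp: fun_eq_iff)
  qed (simp_all add: fun_eq_iff; metis assoc_add_mat comm_add_mat)+
  show "monoid (mat_seq_ring T n)"
    by (rule monoidI) (simp_all add: fun_eq_iff; metis mult_carrier_mat assoc_mult_mat left_mult_one_mat right_mult_one_mat)+
qed (simp_all add: fun_eq_iff; metis add_mult_distrib_mat mult_add_distrib_mat)+

lemma a_inv_R:
  assumes x: "x \<in> carrier (mat_seq_ring (T :: 'a :: field itself) n)"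
  shows "a_inv (mat_seq_ring T n) x = (\<lambda>k. - x k)"
proof -
  interpret ring "mat_seq_ring T n" by (rule ring_R)
  show ?thesis by (rule minus_equality) (use x in \<open>auto simp: fun_eq_iff\<close>)
qed

lemma a_minus_R:
  assumes x: "x \<in> carrier (mat_seq_ring (T :: 'a :: field itself) n)"
    and y: "y \<in> carrier (mat_seq_ring T n)"
  shows "a_minus (mat_seq_ring T n) x y = (\<lambda>k. x k - y k)"
  using x y unfolding a_minus_def a_inv_R[OF y] by (auto simp: fun_eq_iff)

lemma rho_nonneg: "0 \<le> rho m A"
  unfolding rho_def by simp

lemma rho_add:
  assumes "A \<in> carrier_mat m m" "B \<in> carrier_mat m m"
  shows "rho m (A + B) \<le> rho m A + rho m (B :: 'a :: field mat)"
proof -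
  have "vec_space.rank m (A + B) \<le> vec_space.rank m A + vec_space.rank m B"
    using vec_space.rank_subadditive[OF assms] .
  then have "real (vec_space.rank m (A + B)) \<le> real (vec_space.rank m A) + real (vec_space.rank m B)"
    by linarith
  then show ?thesis unfolding rho_def add_divide_distrib[symmetric]
    by (intro divide_right_mono) auto
qed

lemma rho_mono_rank:
  assumes "vec_space.rank m (A :: 'a :: field mat) \<le> vec_space.rank m (B :: 'a mat)"
  shows "rho m A \<le> rho m B"
  unfolding rho_def using assms by (intro divide_right_mono) auto

lemma rho_mult_left:
  assumes "A \<in> carrier_mat m m" "B \<in> carrier_mat m m"
  shows "rho m (A * B) \<le> rho m (B :: 'a :: field mat)"
  by (rule rho_mono_rank, rule vec_space.rank_mult_right[OF assms])

lemma rho_mult_right: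
  assumes "A \<in> carrier_mat m m" "B \<in> carrier_mat m m"
  shows "rho m (A * B) \<le> rho m (A :: 'a :: field mat)"
  by (rule rho_mono_rank, rule vec_space.rank_mult_left[OF assms])

lemma rho_uminus:
  assumes "A \<in> carrier_mat m m"
  shows "rho m (- A) = rho m (A :: 'a :: field mat)"
  unfolding rho_def vec_space.rank_uminus[OF assms] ..

lemma rho_zero: "rho m (0\<^sub>m m m :: 'a :: field mat) = 0"
  unfolding rho_def vec_space.rank_0I by simp

lemma tendsto_le_zero:
  assumes "\<And>k. 0 \<le> f k" "\<And>k. f k \<le> g k" "(g \<longlongrightarrow> (0::real)) F"
  shows "(f \<longlongrightarrow> 0) F"
  by (rule tendsto_sandwich[of "\<lambda>_. 0" f F g]) (use assms in auto)

lemma tendsto_le_zero2: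
  assumes "\<And>k. 0 \<le> f k" "\<And>k. f k \<le> g k + h k" "(g \<longlongrightarrow> (0::real)) F" "(h \<longlongrightarrow> 0) F"
  shows "(f \<longlongrightarrow> 0) F"
  using tendsto_le_zero[OF assms(1,2) tendsto_add_zero[OF assms(3,4)]] .

lemma ideal_I: "ideal (ker_rho (T :: 'a :: field itself) U n) (mat_seq_ring T n)"
proof (rule idealI[OF ring_R])
  let ?R = "mat_seq_ring T n" and ?I = "ker_rho T U n"
  have I: "a \<in> ?I \<longleftrightarrow> a \<in> carrier ?R \<and> ((\<lambda>k. rho (n k) (a k)) \<longlongrightarrow> 0) U" for a
    unfolding ker_rho_def by simp
  show "subgroup ?I (add_monoid ?R)"
  proof
    show "?I \<subseteq> carrier (add_monoid ?R)" unfolding ker_rho_def by auto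
    fix x y assume x: "x \<in> ?I" and y: "y \<in> ?I"
    show "x \<otimes>\<^bsub>add_monoid ?R\<^esub> y \<in> ?I" unfolding I
    proof (simp, intro conjI allI)
      show "x k + y k \<in> carrier_mat (n k) (n k)" for k using x y I by auto
      show "((\<lambda>k. rho (n k) (x k + y k)) \<longlongrightarrow> 0) U"
        by (rule tendsto_le_zero2[OF rho_nonneg rho_add]) (use x y I in auto)
    qed
  next
    show "\<one>\<^bsub>add_monoid ?R\<^esub> \<in> ?I" unfolding I by (simp add: rho_zero)
  next
    fix x assume x: "x \<in> ?I"
    then have xc: "x \<in> carrier ?R" using I by auto
    have "inv\<^bsub>add_monoid ?R\<^esub> x = (\<lambda>k. - x k)" using a_inv_R[OF xc] unfolding a_inv_def .
    then show "inv\<^bsub>add_monoid ?R\<^esub> x \<in> ?I" using x unfolding I by (auto simp: rho_uminus)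
  qed
next
  let ?R = "mat_seq_ring T n" and ?I = "ker_rho T U n"
  have I: "a \<in> ?I \<longleftrightarrow> a \<in> carrier ?R \<and> ((\<lambda>k. rho (n k) (a k)) \<longlongrightarrow> 0) U" for a
    unfolding ker_rho_def by simp
  fix a x assume a: "a \<in> ?I" and x: "x \<in> carrier ?R"
  show "x \<otimes>\<^bsub>?R\<^esub> a \<in> ?I" unfolding I
  proof (simp, intro conjI allI)
    show "x k * a k \<in> carrier_mat (n k) (n k)" for k by (rule mult_carrier_mat) (use x a I in auto)
    show "((\<lambda>k. rho (n k) (x k * a k)) \<longlongrightarrow> 0) U"
      by (rule tendsto_le_zero[OF rho_nonneg rho_mult_left]) (use x a I in auto)
  qed
  show "a \<otimes>\<^bsub>?R\<^esub> x \<in> ?I" unfolding I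
  proof (simp, intro conjI allI)
    show "a k * x k \<in> carrier_mat (n k) (n k)" for k by (rule mult_carrier_mat) (use x a I in auto)
    show "((\<lambda>k. rho (n k) (a k * x k)) \<longlongrightarrow> 0) U"
      by (rule tendsto_le_zero[OF rho_nonneg rho_mult_right]) (use x a I in auto)
  qed
qed

lemma invertible_iff:
  assumes A: "A \<in> carrier_mat m m"
  shows "invertible_mat A \<longleftrightarrow> (\<exists>B \<in> carrier_mat m m. A * B = 1\<^sub>m m \<and> B * A = 1\<^sub>m m)"
proof
  assume "invertible_mat A"
  then obtain B where AB: "A * B = 1\<^sub>m (dim_row A)" and BA: "B * A = 1\<^sub>m (dim_row B)"
    unfolding invertible_mat_def inverts_mat_def by blast
  have "dim_col B = m" using arg_cong[OF AB, of dim_col] A by simp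
  moreover have "dim_row B = m" using arg_cong[OF BA, of dim_col] A by simp
  ultimately show "\<exists>B \<in> carrier_mat m m. A * B = 1\<^sub>m m \<and> B * A = 1\<^sub>m m"
    using AB BA A by (intro bexI[of _ B]) auto
next
  assume "\<exists>B \<in> carrier_mat m m. A * B = 1\<^sub>m m \<and> B * A = 1\<^sub>m m"
  then show "invertible_mat A" using A unfolding invertible_mat_def inverts_mat_def square_mat.simps
    by auto
qed

lemma group_G: "group (gl_seq_group (T :: 'a :: field itself) n)"
proof (rule groupI)
  let ?G = "gl_seq_group T n"
  fix x y assume x: "x \<in> carrier ?G" and y: "y \<in> carrier ?G"
  show "x \<otimes>\<^bsub>?G\<^esub> y \<in> carrier ?G"
  proof (simp, intro allI conjI)
    fix k
    show xy: "x k * y k \<in> carrier_mat (n k) (n k)" by (rule mult_carrier_mat) (use x y in auto)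
    obtain A where A: "A \<in> carrier_mat (n k) (n k)" "x k * A = 1\<^sub>m (n k)" "A * x k = 1\<^sub>m (n k)"
      using x invertible_iff[of "x k" "n k"] by auto
    obtain B where B: "B \<in> carrier_mat (n k) (n k)" "y k * B = 1\<^sub>m (n k)" "B * y k = 1\<^sub>m (n k)"
      using y invertible_iff[of "y k" "n k"] by auto
    have xk: "x k \<in> carrier_mat (n k) (n k)" and yk: "y k \<in> carrier_mat (n k) (n k)" using x y by auto
    have "x k * y k * (B * A) = x k * (y k * (B * A))" using xk yk A B by (intro assoc_mult_mat) auto
    also have "y k * (B * A) = (y k * B) * A" using yk A B by (intro assoc_mult_mat[symmetric]) auto
    finally have 1: "x k * y k * (B * A) = 1\<^sub>m (n k)" using A B xk by simp
    have "B * A * (x k * y k) = B * (A * (x k * y k))" using xk yk A B by (intro assoc_mult_mat) auto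
    also have "A * (x k * y k) = (A * x k) * y k" using yk A xk by (intro assoc_mult_mat[symmetric]) auto
    finally have 2: "B * A * (x k * y k) = 1\<^sub>m (n k)" using A B yk by simp
    show "invertible_mat (x k * y k)" unfolding invertible_iff[OF xy]
      using 1 2 A B by (intro bexI[of _ "B * A"]) auto
  qed
next
  let ?G = "gl_seq_group T n"
  have "invertible_mat (1\<^sub>m m :: 'a mat)" for m
    by (subst invertible_iff[of _ m]) (auto intro!: bexI[of _ "1\<^sub>m m"])
  then show "\<one>\<^bsub>?G\<^esub> \<in> carrier ?G" by auto
  fix x y z assume x: "x \<in> carrier ?G" and y: "y \<in> carrier ?G" and z: "z \<in> carrier ?G"
  show "x \<otimes>\<^bsub>?G\<^esub> y \<otimes>\<^bsub>?G\<^esub> z = x \<otimes>\<^bsub>?G\<^esub> (y \<otimes>\<^bsub>?G\<^esub> z)"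
    using x y z by (simp add: fun_eq_iff) (metis assoc_mult_mat)
next
  let ?G = "gl_seq_group T n"
  fix x assume x: "x \<in> carrier ?G"
  show "\<one>\<^bsub>?G\<^esub> \<otimes>\<^bsub>?G\<^esub> x = x" using x by (simp add: fun_eq_iff) (metis left_mult_one_mat)
  have "\<exists>B. B \<in> carrier_mat (n k) (n k) \<and> x k * B = 1\<^sub>m (n k) \<and> B * x k = 1\<^sub>m (n k)" for k
  proof -
    have "x k \<in> carrier_mat (n k) (n k)" "invertible_mat (x k)" using x by auto
    then show ?thesis using invertible_iff[of "x k" "n k"] by blast
  qed
  then obtain y where y: "\<And>k. y k \<in> carrier_mat (n k) (n k) \<and> x k * y k = 1\<^sub>m (n k) \<and> y k * x k = 1\<^sub>m (n k)"
    by metis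
  have "invertible_mat (y k)" for k
  proof -
    have "x k \<in> carrier_mat (n k) (n k)" using x by auto
    then show ?thesis using y[of k] by (subst invertible_iff[of _ "n k"]) (auto intro!: bexI[of _ "x k"])
  qed
  then have "y \<in> carrier ?G" using y by auto
  moreover have "y \<otimes>\<^bsub>?G\<^esub> x = \<one>\<^bsub>?G\<^esub>" using y by (simp add: fun_eq_iff)
  ultimately show "\<exists>y\<in>carrier ?G. y \<otimes>\<^bsub>?G\<^esub> x = \<one>\<^bsub>?G\<^esub>" by blast
qed



lemma perturb_inv:
  assumes a: "a \<in> carrier_mat m m" and b: "b \<in> carrier_mat m m"
  shows "\<exists>g \<in> carrier_mat m m. invertible_mat (g :: 'a :: field mat) \<and>
     vec_space.rank m (g - a) \<le> vec_space.rank m (a * b - 1\<^sub>m m)"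
proof -
  obtain g where g: "g \<in> carrier_mat m m" "vec_space.rank m g = m"
    "vec_space.rank m (g - a) + vec_space.rank m a \<le> m"
    using vec_space.rank_perturb[OF a] by blast
  have "det g \<noteq> 0" using vec_space.det_rank_iff[OF g(1)] g(2) by simp
  then have "g \<in> Units (ring_mat TYPE('a) m ())" using det_non_zero_imp_unit[OF g(1), where b="()"] by blast
  then obtain h where h: "h \<in> carrier_mat m m" "h * g = 1\<^sub>m m" "g * h = 1\<^sub>m m"
    unfolding Units_def by (auto simp: ring_mat_def)
  have inv: "invertible_mat g" using invertible_iff[OF g(1)] h by blast
  have ab: "a * b \<in> carrier_mat m m" using a b by auto
  have e: "1\<^sub>m m = a * b + (- (a * b - 1\<^sub>m m))" using ab by (auto intro!: eq_matI)
  have "m = vec_space.rank m (1\<^sub>m m :: 'a mat)" by (rule vec_space.rank_one[symmetric])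
  also have "\<dots> \<le> vec_space.rank m (a * b) + vec_space.rank m (- (a * b - 1\<^sub>m m))"
    by (subst e, rule vec_space.rank_subadditive) (use ab in auto)
  also have "vec_space.rank m (- (a * b - 1\<^sub>m m)) = vec_space.rank m (a * b - 1\<^sub>m m)"
    by (rule vec_space.rank_uminus) (use ab in auto)
  also have "vec_space.rank m (a * b) \<le> vec_space.rank m a" by (rule vec_space.rank_mult_left[OF a b])
  finally have "m \<le> vec_space.rank m a + vec_space.rank m (a * b - 1\<^sub>m m)" by simp
  then show ?thesis using g inv by (intro bexI[of _ g]) auto
qed

context
  fixes T :: "'a :: field itself" and U :: "nat filter" and n :: "nat \<Rightarrow> nat"
begin

abbreviation "RR \<equiv> mat_seq_ring T n"
abbreviation "II \<equiv> ker_rho T U n"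
abbreviation "GG \<equiv> gl_seq_group T n"
abbreviation "QQ \<equiv> RR Quot II"
abbreviation "HH \<equiv> units_of QQ"
abbreviation "hh \<equiv> (\<lambda>g. II +>\<^bsub>RR\<^esub> g)"

interpretation Rr: ring RR by (rule ring_R)
interpretation Id: ideal II RR by (rule ideal_I)
interpretation Q: ring QQ by (rule Id.quotient_is_ring)
interpretation Gg: group GG by (rule group_G)

lemma I_iff: "a \<in> II \<longleftrightarrow> a \<in> carrier RR \<and> ((\<lambda>k. rho (n k) (a k)) \<longlongrightarrow> 0) U"
  unfolding ker_rho_def by simp

lemma coset_eq:
  assumes x: "x \<in> carrier RR" and y: "y \<in> carrier RR"
  shows "hh x = hh y \<longleftrightarrow> ((\<lambda>k. rho (n k) (x k - y k)) \<longlongrightarrow> 0) U"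
proof -
  have xy: "x \<ominus>\<^bsub>RR\<^esub> y = (\<lambda>k. x k - y k)" by (rule a_minus_R[OF x y])
  have c: "(\<lambda>k. x k - y k) \<in> carrier RR" using y by (auto intro: minus_carrier_mat)
  have "hh x = hh y \<longleftrightarrow> x \<ominus>\<^bsub>RR\<^esub> y \<in> II"
  proof
    assume "hh x = hh y"
    moreover have "x \<in> hh x" by (rule Id.a_rcos_self[OF x])
    ultimately have "x \<in> hh y" by simp
    then show "x \<ominus>\<^bsub>RR\<^esub> y \<in> II" using Id.a_rcos_module_minus[OF ring_R y x] by simp
  next
    assume "x \<ominus>\<^bsub>RR\<^esub> y \<in> II"
    then have "x \<in> hh y" using Id.a_rcos_module_minus[OF ring_R y x] by simp
    then show "hh x = hh y" using Id.a_repr_independence'[OF _ y] by simp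
  qed
  then show ?thesis unfolding xy using I_iff[of "\<lambda>k. x k - y k"] c by simp
qed

lemma carrier_G_R: "g \<in> carrier GG \<Longrightarrow> g \<in> carrier RR" by auto

lemma h_mult: "x \<in> carrier RR \<Longrightarrow> y \<in> carrier RR \<Longrightarrow> hh (x \<otimes>\<^bsub>RR\<^esub> y) = hh x \<otimes>\<^bsub>QQ\<^esub> hh y"
  using ring_hom_mult[OF Id.rcos_ring_hom] by simp

lemma h_one: "hh \<one>\<^bsub>RR\<^esub> = \<one>\<^bsub>QQ\<^esub>"
  using ring_hom_one[OF Id.rcos_ring_hom] by simp

lemma h_carrier: "x \<in> carrier RR \<Longrightarrow> hh x \<in> carrier QQ"
  using ring_hom_closed[OF Id.rcos_ring_hom] by simp

lemma h_units: assumes g: "g \<in> carrier GG" shows "hh g \<in> Units QQ"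
proof -
  obtain y where y: "y \<in> carrier GG" "y \<otimes>\<^bsub>GG\<^esub> g = \<one>\<^bsub>GG\<^esub>" "g \<otimes>\<^bsub>GG\<^esub> y = \<one>\<^bsub>GG\<^esub>"
    using Gg.l_inv Gg.r_inv Gg.inv_closed g by blast
  have "hh y \<otimes>\<^bsub>QQ\<^esub> hh g = \<one>\<^bsub>QQ\<^esub>" using y h_mult[of y g] g h_one by auto
  moreover have "hh g \<otimes>\<^bsub>QQ\<^esub> hh y = \<one>\<^bsub>QQ\<^esub>" using y h_mult[of g y] g h_one by auto
  ultimately show ?thesis unfolding Units_def using h_carrier y g carrier_G_R by blast
qed

lemma group_hom_h: "group_hom GG HH hh"
proof (rule group_hom.intro)
  show "group GG" by (rule group_G)
  show "group HH" by (rule monoid.units_group) (rule Q.monoid_axioms)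
  show "group_hom_axioms GG HH hh"
  proof
    show "hh \<in> hom GG HH"
    proof (rule homI)
      fix x assume "x \<in> carrier GG" then show "hh x \<in> carrier HH"
        using h_units unfolding units_of_def by simp
    next
      fix x y assume x: "x \<in> carrier GG" and y: "y \<in> carrier GG"
      have "hh (x \<otimes>\<^bsub>GG\<^esub> y) = hh (x \<otimes>\<^bsub>RR\<^esub> y)" by simp
      also have "\<dots> = hh x \<otimes>\<^bsub>QQ\<^esub> hh y" using h_mult x y by auto
      finally show "hh (x \<otimes>\<^bsub>GG\<^esub> y) = hh x \<otimes>\<^bsub>HH\<^esub> hh y" unfolding units_of_def by simp
    qed
  qed
qed

lemma kernel_eq: "kernel GG HH hh = d_kernel T U n"
proof -
  have "hh x = \<one>\<^bsub>HH\<^esub> \<longleftrightarrow> ((\<lambda>k. rho (n k) (x k - 1\<^sub>m (n k))) \<longlongrightarrow> 0) U" if x: "x \<in> carrier GG" for x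
  proof -
    have "\<one>\<^bsub>HH\<^esub> = hh \<one>\<^bsub>RR\<^esub>" using h_one unfolding units_of_def by simp
    then show ?thesis using coset_eq[of x "\<one>\<^bsub>RR\<^esub>"] x by auto
  qed
  then show ?thesis unfolding kernel_def d_kernel_def by auto
qed

lemma h_onto: "hh ` carrier GG = carrier HH"
proof
  show "hh ` carrier GG \<subseteq> carrier HH" using h_units unfolding units_of_def by auto
next
  show "carrier HH \<subseteq> hh ` carrier GG"
  proof
    fix X assume "X \<in> carrier HH"
    then have X: "X \<in> Units QQ" unfolding units_of_def by simp
    then obtain Y where XY: "X \<in> carrier QQ" "Y \<in> carrier QQ" "X \<otimes>\<^bsub>QQ\<^esub> Y = \<one>\<^bsub>QQ\<^esub>"
      unfolding Units_def by blast
    have cQ: "Z \<in> carrier QQ \<Longrightarrow> \<exists>a \<in> carrier RR. Z = hh a" for Z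
      unfolding FactRing_def A_RCOSETS_def RCOSETS_def a_r_coset_def by auto
    obtain a where a: "a \<in> carrier RR" "X = hh a" using cQ[OF XY(1)] by blast
    obtain b where b: "b \<in> carrier RR" "Y = hh b" using cQ[OF XY(2)] by blast
    have "hh (a \<otimes>\<^bsub>RR\<^esub> b) = hh \<one>\<^bsub>RR\<^esub>" using XY(3) a b h_mult h_one by simp
    moreover have "a \<otimes>\<^bsub>RR\<^esub> b \<in> carrier RR" by (rule Rr.m_closed[OF a(1) b(1)])
    ultimately have lim: "((\<lambda>k. rho (n k) (a k * b k - 1\<^sub>m (n k))) \<longlongrightarrow> 0) U"
      using coset_eq[of "a \<otimes>\<^bsub>RR\<^esub> b" "\<one>\<^bsub>RR\<^esub>"] Rr.one_closed by simp
    have "\<exists>g. g \<in> carrier_mat (n k) (n k) \<and> invertible_mat g \<and>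
      vec_space.rank (n k) (g - a k) \<le> vec_space.rank (n k) (a k * b k - 1\<^sub>m (n k))" for k
      using perturb_inv[of "a k" "n k" "b k"] a b by auto
    then obtain g where g: "\<And>k. g k \<in> carrier_mat (n k) (n k) \<and> invertible_mat (g k) \<and>
      vec_space.rank (n k) (g k - a k) \<le> vec_space.rank (n k) (a k * b k - 1\<^sub>m (n k))"
      by metis
    have gG: "g \<in> carrier GG" using g by auto
    have "((\<lambda>k. rho (n k) (g k - a k)) \<longlongrightarrow> 0) U"
      by (rule tendsto_le_zero[OF rho_nonneg _ lim], rule rho_mono_rank) (use g in auto)
    then have "hh g = hh a" using coset_eq[of g a] gG a by auto
    then show "X \<in> hh ` carrier GG" using gG a by auto
  qed
qed

lemma natural_map_eq: "natural_map T U n = (\<lambda>X. the_elem (hh ` X))"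
  unfolding natural_map_def by (rule ext) simp

end

theorem mainTheorem6:
  fixes T :: "'a::field itself" and U :: "nat filter" and n :: "nat \<Rightarrow> nat"
  assumes "ultrafilter U" and "nonprincipal U"
    and "filterlim n at_top sequentially"
  shows "ideal (ker_rho T U n) (mat_seq_ring T n)
    \<and> d_kernel T U n \<lhd> gl_seq_group T n
    \<and> natural_map T U n \<in> iso (gl_seq_group T n Mod d_kernel T U n)
          (units_of (mat_seq_ring T n Quot ker_rho T U n))"
proof (intro conjI)
  show "ideal (ker_rho T U n) (mat_seq_ring T n)" by (rule ideal_I)
  show "d_kernel T U n \<lhd> gl_seq_group T n"
  proof -
    have "kernel (gl_seq_group T n) (units_of (mat_seq_ring T n Quot ker_rho T U n))
       (\<lambda>g. ker_rho T U n +>\<^bsub>mat_seq_ring T n\<^esub> g) \<lhd> gl_seq_group T n"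
      by (rule group_hom.normal_kernel[OF group_hom_h])
    then show ?thesis unfolding kernel_eq .
  qed
  show "natural_map T U n \<in> iso (gl_seq_group T n Mod d_kernel T U n)
          (units_of (mat_seq_ring T n Quot ker_rho T U n))"
  proof -
    have "(\<lambda>X. the_elem ((\<lambda>g. ker_rho T U n +>\<^bsub>mat_seq_ring T n\<^esub> g) ` X)) \<in>
      iso (gl_seq_group T n Mod kernel (gl_seq_group T n) (units_of (mat_seq_ring T n Quot ker_rho T U n))
       (\<lambda>g. ker_rho T U n +>\<^bsub>mat_seq_ring T n\<^esub> g)) (units_of (mat_seq_ring T n Quot ker_rho T U n))"
      by (rule group_hom.FactGroup_iso_set[OF group_hom_h h_onto])
    then show ?thesis unfolding kernel_eq natural_map_eq .
  qed
qed


end
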